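(* Let $\mathcal E$ be a nest on a complex Banach space $X$ and let $\mathcal J$ be a $\mathcal T(\mathcal E)$-bimodule that is closed in the weak operator topology. Then $\mathcal J=\mathcal M(\Phi_{\mathcal J})$, and $\mathcal J$ is reflexive, i.e. $\mathcal J=\operatorname{Ref}\mathcal J$.
   Context: A nest $\mathcal E$ on $X$ is a family of closed linear subspaces of $X$, totally ordered by inclusion, containing $\{0\}$ and $X$, closed under arbitrary meets (intersections) and joins (norm-closed linear spans of unions). $\mathcal T(\mathcal E)=\{T\in\mathcal B(X): TE\subseteq E\ \forall E\in\mathcal E\}$. A $\mathcal T(\mathcal E)$-bimodule is a linear subspace $\mathcal J\subseteq\mathcal B(X)$ with $\mathcal T(\mathcal E)\mathcal J\subseteq\mathcal J$ and $\mathcal J\mathcal T(\mathcal E)\subseteq\mathcal J$. $\Phi_{\mathcal J}(E)=[\mathcal JE]$, the norm-closed linear span of $\{Tx:T\in\mathcal J,x\in E\}$. For a map $\Phi:\mathcal E\to\mathcal E$, $\mathcal M(\Phi)=\{T\in\mathcal B(X): TE\subseteq\Phi(E)\ \forall E\in\mathcal E\}$. For a subspace $\mathcal A\subseteq\mathcal B(X)$, $\operatorname{Ref}\mathcal A=\{T\in\mathcal B(X): Tx\in[\mathcal Ax]\ \forall x\in X\}$, where $[\mathcal Ax]$ is the norm-closed linear span of $\{Ax: A\in\mathcal A\}$. *)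

theory Defs
  imports "HOL-Analysis.Analysis"
begin

class complex_banach = banach +
  fixes scaleC :: "complex \<Rightarrow> 'a \<Rightarrow> 'a"
  assumes scaleC_add_right: "scaleC a (x + y) = scaleC a x + scaleC a y"
    and scaleC_add_left: "scaleC (a + b) x = scaleC a x + scaleC b x"
    and scaleC_scaleC: "scaleC a (scaleC b x) = scaleC (a * b) x"
    and scaleC_one: "scaleC 1 x = x"
    and scaleR_scaleC: "scaleR r x = scaleC (complex_of_real r) x"
    and norm_scaleC: "norm (scaleC a x) = cmod a * norm x"

definition csubspace :: "'a::complex_banach set \<Rightarrow> bool" where
  "csubspace S = module.subspace scaleC S"

definition cspan :: "'a::complex_banach set \<Rightarrow> 'a set" where
  "cspan S = module.span scaleC S"

definition closed_span :: "'a::complex_banach set \<Rightarrow> 'a set" where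
  "closed_span S = closure (cspan S)"

definition bounded_clinear_op :: "('a::complex_banach \<Rightarrow> 'a) \<Rightarrow> bool" where
  "bounded_clinear_op T \<longleftrightarrow> bounded_linear T \<and> (\<forall>c x. T (scaleC c x) = scaleC c (T x))"

definition BX :: "('a::complex_banach \<Rightarrow> 'a) set" where
  "BX = {T. bounded_clinear_op T}"

definition cdual :: "('a::complex_banach \<Rightarrow> complex) set" where
  "cdual = {f. bounded_linear f \<and> (\<forall>c x. f (scaleC c x) = c * f x)}"

definition is_nest :: "'a::complex_banach set set \<Rightarrow> bool" where
  "is_nest \<E> \<longleftrightarrow>
     (\<forall>E\<in>\<E>. csubspace E \<and> closed E) \<and>
     (\<forall>E\<in>\<E>. \<forall>F\<in>\<E>. E \<subseteq> F \<or> F \<subseteq> E) \<and>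
     {0} \<in> \<E> \<and> UNIV \<in> \<E> \<and>
     (\<forall>\<F>. \<F> \<subseteq> \<E> \<longrightarrow> \<Inter>\<F> \<in> \<E>) \<and>
     (\<forall>\<F>. \<F> \<subseteq> \<E> \<longrightarrow> closed_span (\<Union>\<F>) \<in> \<E>)"

definition nest_alg :: "'a::complex_banach set set \<Rightarrow> ('a \<Rightarrow> 'a) set" where
  "nest_alg \<E> = {T \<in> BX. \<forall>E\<in>\<E>. T ` E \<subseteq> E}"

definition op_subspace :: "('a::complex_banach \<Rightarrow> 'a) set \<Rightarrow> bool" where
  "op_subspace \<J> \<longleftrightarrow> \<J> \<subseteq> BX \<and> (\<lambda>x. 0) \<in> \<J> \<and>
     (\<forall>S\<in>\<J>. \<forall>T\<in>\<J>. (\<lambda>x. S x + T x) \<in> \<J>) \<and>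
     (\<forall>c. \<forall>T\<in>\<J>. (\<lambda>x. scaleC c (T x)) \<in> \<J>)"

definition is_bimodule :: "'a::complex_banach set set \<Rightarrow> ('a \<Rightarrow> 'a) set \<Rightarrow> bool" where
  "is_bimodule \<E> \<J> \<longleftrightarrow> op_subspace \<J> \<and>
     (\<forall>A\<in>nest_alg \<E>. \<forall>T\<in>\<J>. A \<circ> T \<in> \<J> \<and> T \<circ> A \<in> \<J>)"

text \<open>Closure in the weak operator topology of B(X): T lies in the WOT-closure of A
iff every basic WOT-neighbourhood
 {S. |f_i((T - S) x_i)| < e, i = 1..n} of T meets A.\<close>
definition wot_closure :: "('a::complex_banach \<Rightarrow> 'a) set \<Rightarrow> ('a \<Rightarrow> 'a) set" where
  "wot_closure \<A> = {T \<in> BX. \<forall>P e. finite P \<and> P \<subseteq> UNIV \<times> cdual \<and> e > 0 \<longrightarrow>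
      (\<exists>S\<in>\<A>. \<forall>(x, f)\<in>P. cmod (f (T x) - f (S x)) < e)}"

definition wot_closed :: "('a::complex_banach \<Rightarrow> 'a) set \<Rightarrow> bool" where
  "wot_closed \<A> \<longleftrightarrow> wot_closure \<A> \<subseteq> \<A>"

definition Phi :: "('a::complex_banach \<Rightarrow> 'a) set \<Rightarrow> 'a set \<Rightarrow> 'a set" where
  "Phi \<J> E = closed_span {T x | T x. T \<in> \<J> \<and> x \<in> E}"

definition Mop :: "'a::complex_banach set set \<Rightarrow> ('a set \<Rightarrow> 'a set) \<Rightarrow> ('a \<Rightarrow> 'a) set" where
  "Mop \<E> \<Phi> = {T \<in> BX. \<forall>E\<in>\<E>. T ` E \<subseteq> \<Phi> E}"

definition Ref :: "('a::complex_banach \<Rightarrow> 'a) set \<Rightarrow> ('a \<Rightarrow> 'a) set" where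
  "Ref \<A> = {T \<in> BX. \<forall>x. T x \<in> closed_span {A x | A. A \<in> \<A>}}"

end

theory Submission
  imports Defs
begin



lemma subspace_pair_uniq:
  fixes M :: "('a::real_normed_vector \<times> real) set"
  assumes "subspace M" "\<forall>(x,a)\<in>M. a \<le> norm x" "(x,a)\<in>M" "(x,b)\<in>M"
  shows "a = b"
proof -
  have "(x,a) - (x,b) \<in> M" "(x,b) - (x,a) \<in> M"
    using subspace_diff[OF assms(1) assms(3) assms(4)] subspace_diff[OF assms(1) assms(4) assms(3)] by auto
  hence "a - b \<le> 0" "b - a \<le> 0" using assms(2) by auto
  thus ?thesis by simp
qed

lemma real_HB:
  fixes G0 :: "('a::real_normed_vector \<times> real) set"
  assumes G0s: "subspace G0" and G0b: "\<forall>(x,a)\<in>G0. a \<le> norm x"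
  shows "\<exists>u. bounded_linear u \<and> (\<forall>(x,a)\<in>G0. u x = a) \<and> (\<forall>x. \<bar>u x\<bar> \<le> norm x)"
proof -
  let ?A = "{H. subspace H \<and> G0 \<subseteq> H \<and> (\<forall>(x,a)\<in>H. a \<le> norm x)}"
  have "\<exists>M\<in>?A. \<forall>X\<in>?A. M \<subseteq> X \<longrightarrow> X = M"
  proof (rule Zorn_Lemma2, intro ballI)
    fix C assume C: "C \<in> chains ?A"
    show "\<exists>U\<in>?A. \<forall>X\<in>C. X \<subseteq> U"
    proof (cases "C = {}")
      case True
      have "G0 \<in> ?A" using G0s G0b by simp
      thus ?thesis using True by (intro bexI[of _ G0]) auto
    next
      case False
      have CA: "C \<subseteq> ?A" and ch: "\<And>X Y. X \<in> C \<Longrightarrow> Y \<in> C \<Longrightarrow> X \<subseteq> Y \<or> Y \<subseteq> X"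
        using C unfolding chains_def chain_subset_def by auto
      have "subspace (\<Union>C)"
        unfolding subspace_def
      proof (intro conjI ballI allI)
        obtain X where "X \<in> C" using False by auto
        thus "0 \<in> \<Union>C" using CA subspace_0 by blast
      next
        fix x y assume "x \<in> \<Union>C" "y \<in> \<Union>C"
        then obtain X Y where "X\<in>C" "Y\<in>C" "x\<in>X" "y\<in>Y" by auto
        thus "x + y \<in> \<Union>C" using ch[of X Y] CA subspace_add
          by (metis (no_types, lifting) UnionI mem_Collect_eq subset_iff)
      next
        fix c x assume "x \<in> \<Union>C"
        then obtain X where "X\<in>C" "x\<in>X" by auto
        thus "c *\<^sub>R x \<in> \<Union>C" using CA subspace_scale by blast
      qed
      moreover have "G0 \<subseteq> \<Union>C"
      proof -
        obtain X where "X \<in> C" using False by auto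
        thus ?thesis using CA by auto
      qed
      moreover have "\<forall>(x,a)\<in>\<Union>C. a \<le> norm x" using CA by blast
      ultimately have "\<Union>C \<in> ?A" by simp
      thus ?thesis by (intro bexI[of _ "\<Union>C"]) auto
    qed
  qed
  then obtain M where MA: "M \<in> ?A" and Mmax0: "\<forall>X\<in>?A. M \<subseteq> X \<longrightarrow> X = M" by (rule bexE)
  have Mmax: "X = M" if "X\<in>?A" "M \<subseteq> X" for X using Mmax0 that by (meson)
  have Ms: "subspace M" and MG: "G0 \<subseteq> M" and Mb: "\<forall>(x,a)\<in>M. a \<le> norm x" using MA by auto
  have tot: "\<exists>a. (x,a) \<in> M" for x
  proof (rule ccontr)
    assume nx: "\<not> (\<exists>a. (x,a) \<in> M)"
    let ?S = "{a - norm (y - x) | y a. (y,a) \<in> M}"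
    have key: "a - norm (y - x) \<le> norm (z + x) - b" if "(y,a)\<in>M" "(z,b)\<in>M" for y a z b
    proof -
      have "(y,a) + (z,b) \<in> M" using that Ms subspace_add by blast
      hence "a + b \<le> norm (y + z)" using Mb by auto
      also have "\<dots> = norm ((y - x) + (z + x))" by simp
      also have "\<dots> \<le> norm (y - x) + norm (z + x)" by (rule norm_triangle_ineq)
      finally show ?thesis by simp
    qed
    have M00: "(0,0) \<in> M" using subspace_0[OF Ms] by (simp add: zero_prod_def)
    have ne: "?S \<noteq> {}" using M00 by blast
    have bdd: "bdd_above ?S" unfolding bdd_above_def
      using key[OF _ M00] by blast
    define c where "c = Sup ?S"
    have L: "a - norm (y - x) \<le> c" if "(y,a)\<in>M" for y a
      unfolding c_def using that bdd by (intro cSup_upper) auto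
    have R: "c \<le> norm (z + x) - b" if "(z,b)\<in>M" for z b
      unfolding c_def using that ne key by (intro cSup_least) auto
    let ?M' = "span (insert (x,c) M)"
    have "?M' \<in> ?A"
    proof (intro CollectI conjI)
      show "subspace ?M'" by simp
      show "G0 \<subseteq> ?M'" using MG span_superset by blast
      show "\<forall>(p,q)\<in>?M'. q \<le> norm p"
      proof (clarify)
        fix p q assume "(p,q) \<in> ?M'"
        then obtain k where "(p,q) - k *\<^sub>R (x,c) \<in> span M" using span_breakdown_eq by blast
        hence yM: "(p - k *\<^sub>R x, q - k * c) \<in> M" using span_eq_iff[THEN iffD2, OF Ms] by simp
        define y a where "y = p - k *\<^sub>R x" and "a = q - k * c"
        have pq: "p = y + k *\<^sub>R x" "q = a + k * c" unfolding y_def a_def by auto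
        have yaM: "(y,a) \<in> M" using yM y_def a_def by simp
        consider "k > 0" | "k < 0" | "k = 0" by linarith
        thus "q \<le> norm p"
        proof cases
          case 1
          have "(1/k) *\<^sub>R (y,a) \<in> M" using yaM Ms subspace_scale by blast
          hence "c \<le> norm ((1/k) *\<^sub>R y + x) - a / k" using R by simp
          hence "k * c \<le> k * norm ((1/k) *\<^sub>R y + x) - a" using 1
            by (simp add: field_simps)
          also have "k * norm ((1/k) *\<^sub>R y + x) = norm (k *\<^sub>R ((1/k) *\<^sub>R y + x))" using 1 by simp
          also have "k *\<^sub>R ((1/k) *\<^sub>R y + x) = y + k *\<^sub>R x" using 1 by (simp add: scaleR_add_right)
          finally show ?thesis using pq by simp
        next
          case 2
          define s where "s = - k"
          have s: "s > 0" using 2 s_def by simp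
          have "(1/s) *\<^sub>R (y,a) \<in> M" using yaM Ms subspace_scale by blast
          hence "a / s - norm ((1/s) *\<^sub>R y - x) \<le> c" using L by simp
          hence "a - s * norm ((1/s) *\<^sub>R y - x) \<le> s * c" using s
            by (simp add: field_simps)
          also have "s * norm ((1/s) *\<^sub>R y - x) = norm (s *\<^sub>R ((1/s) *\<^sub>R y - x))" using s by simp
          also have "s *\<^sub>R ((1/s) *\<^sub>R y - x) = y + k *\<^sub>R x" using s s_def by (simp add: scaleR_diff_right)
          finally show ?thesis using pq s_def by simp
        next
          case 3 thus ?thesis using pq yaM Mb by auto
        qed
      qed
    qed
    moreover have "M \<subseteq> ?M'" using span_superset by blast
    ultimately have "?M' = M" by (rule Mmax)
    moreover have "(x,c) \<in> ?M'" using span_superset by blast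
    ultimately show False using nx by auto
  qed
  define u where "u x = (SOME a. (x,a) \<in> M)" for x
  have uM: "(x, u x) \<in> M" for x unfolding u_def using tot someI_ex by metis
  have uq: "(x,a) \<in> M \<Longrightarrow> u x = a" for x a using subspace_pair_uniq[OF Ms Mb] uM by blast
  have uadd: "u (x + y) = u x + u y" for x y
    using uq subspace_add[OF Ms uM uM] by simp
  have uscale: "u (r *\<^sub>R x) = r *\<^sub>R u x" for r x
    using uq subspace_scale[OF Ms uM] by simp
  have ub: "u x \<le> norm x" for x using Mb uM by auto
  have uabs: "\<bar>u x\<bar> \<le> norm x" for x
  proof -
    have "u (-x) = - u x" using uscale[of "-1" x] by simp
    thus ?thesis using ub[of x] ub[of "-x"] by simp
  qed
  have "bounded_linear u"
    by (rule bounded_linear_intro[where K=1]) (use uadd uscale uabs in auto)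
  moreover have "\<forall>(x,a)\<in>G0. u x = a" using MG uq by auto
  ultimately show ?thesis using uabs by blast
qed





interpretation cvs: vector_space "scaleC :: complex \<Rightarrow> 'a \<Rightarrow> 'a::complex_banach"
  by unfold_locales (simp_all add: scaleC_add_right scaleC_add_left scaleC_scaleC scaleC_one)

lemma cspan_eq: "cspan = cvs.span" by (simp add: cspan_def fun_eq_iff)
lemma csubspace_eq: "csubspace = cvs.subspace" by (simp add: csubspace_def fun_eq_iff)

lemma scaleC_real: "scaleC (complex_of_real r) x = scaleR r x"
  by (simp add: scaleR_scaleC)

lemma csubspace_real: "cvs.subspace C \<Longrightarrow> subspace C"
  unfolding subspace_def cvs.subspace_def by (simp add: scaleR_scaleC)

lemma scaleC_decomp: "scaleC c x = scaleR (Re c) x + scaleR (Im c) (scaleC \<i> x)"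
proof -
  have "c = complex_of_real (Re c) + \<i> * complex_of_real (Im c)" by (simp add: complex_eq_iff)
  hence "scaleC c x = scaleC (complex_of_real (Re c)) x + scaleC (\<i> * complex_of_real (Im c)) x"
    by (metis scaleC_add_left)
  thus ?thesis by (simp add: scaleR_scaleC scaleC_scaleC mult.commute)
qed

lemma scaleC_scaleR_comm: "scaleC c (scaleR r x) = scaleR r (scaleC c x)"
  by (simp add: scaleR_scaleC scaleC_scaleC mult.commute)

lemma bounded_linear_scaleC: "bounded_linear (\<lambda>x::'a::complex_banach. scaleC c x)"
  by (rule bounded_linear_intro[where K="cmod c"])
     (simp_all add: scaleC_add_right scaleC_scaleR_comm norm_scaleC mult.commute)

lemma bounded_linear_scaleC_left: "bounded_linear (\<lambda>k. scaleC k (v::'a::complex_banach))"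
  by (rule bounded_linear_intro[where K="norm v"])
     (simp_all add: scaleC_add_left norm_scaleC scaleR_scaleC scaleC_scaleC scaleR_conv_of_real)

lemma complexify:
  fixes u :: "'a::complex_banach \<Rightarrow> real"
  assumes u: "bounded_linear u"
  defines "h0 \<equiv> \<lambda>x. Complex (u x) (- u (scaleC \<i> x))"
  shows "bounded_linear h0" and "\<And>c x. h0 (scaleC c x) = c * h0 x"
proof -
  interpret u: bounded_linear u by fact
  have ui: "bounded_linear (\<lambda>x. u (scaleC \<i> x))"
    using bounded_linear_compose[OF u bounded_linear_scaleC] by simp
  interpret ui: bounded_linear "\<lambda>x. u (scaleC \<i> x)" by fact
  obtain K1 where K1: "\<And>x. norm (u x) \<le> norm x * K1" using u.bounded by blast
  obtain K2 where K2: "\<And>x. norm (u (scaleC \<i> x)) \<le> norm x * K2" using ui.bounded by blast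
  show "bounded_linear h0"
  proof (rule bounded_linear_intro[where K="K1 + K2"])
    show "h0 (x + y) = h0 x + h0 y" for x y
      unfolding h0_def by (simp add: complex_eq_iff u.add ui.add)
    show "h0 (r *\<^sub>R x) = r *\<^sub>R h0 x" for r x
      unfolding h0_def by (simp add: complex_eq_iff u.scale ui.scale)
    show "norm (h0 x) \<le> norm x * (K1 + K2)" for x
    proof -
      have "norm (h0 x) \<le> \<bar>u x\<bar> + \<bar>u (scaleC \<i> x)\<bar>"
        unfolding h0_def using cmod_le[of "Complex (u x) (- u (scaleC \<i> x))"] by simp
      also have "\<dots> \<le> norm x * K1 + norm x * K2" using K1[of x] K2[of x] by simp
      finally show ?thesis by (simp add: distrib_left)
    qed
  qed
  show "h0 (scaleC c x) = c * h0 x" for c x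
  proof -
    have e1: "u (scaleC c x) = Re c * u x + Im c * u (scaleC \<i> x)"
      by (simp add: scaleC_decomp[of c x] u.add u.scale)
    have e2: "u (scaleC (\<i> * c) x) = - Im c * u x + Re c * u (scaleC \<i> x)"
      by (simp add: scaleC_decomp[of "\<i> * c" x] u.add u.diff u.scale)
    have e3: "scaleC \<i> (scaleC c x) = scaleC (\<i> * c) x" by (simp add: scaleC_scaleC)
    show ?thesis unfolding h0_def by (simp add: complex_eq_iff e1 e2 e3 algebra_simps)
  qed
qed

lemma complex_HB:
  fixes C :: "'a::complex_banach set"
  assumes Cs: "cvs.subspace C" and bC: "b \<notin> closure C"
  shows "\<exists>h\<in>cdual. (\<forall>c\<in>C. h c = 0) \<and> h b = 1"
proof -
  have C0: "0 \<in> C" using Cs cvs.subspace_0 by blast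
  hence Cne: "C \<noteq> {}" by auto
  define d where "d = infdist b C"
  have dpos: "d > 0" using bC in_closure_iff_infdist_zero[OF Cne, of b] infdist_nonneg[of b C]
    unfolding d_def by linarith
  have Crs: "subspace C" using csubspace_real[OF Cs] .
  have C0s: "subspace (C \<times> {0::real})"
    unfolding subspace_def using Crs subspace_0 subspace_add subspace_scale by (auto simp: zero_prod_def)
  define G0 where "G0 = span (insert (b, d) (C \<times> {0::real}))"
  have G0s: "subspace G0" unfolding G0_def by simp
  have G0b: "\<forall>(p,q)\<in>G0. q \<le> norm p"
  proof clarify
    fix p q assume "(p,q) \<in> G0"
    then obtain k where "(p,q) - k *\<^sub>R (b,d) \<in> span (C \<times> {0::real})"
      unfolding G0_def using span_breakdown_eq by blast
    hence "(p,q) - k *\<^sub>R (b,d) \<in> C \<times> {0::real}" using span_eq_iff[THEN iffD2, OF C0s] by simp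
    hence pC: "p - k *\<^sub>R b \<in> C" and q: "q = k * d" by auto
    show "q \<le> norm p"
    proof (cases "k > 0")
      case False
      hence "k \<le> 0" by simp
      hence "k * d \<le> 0" using dpos by (simp add: mult_nonpos_nonneg)
      thus ?thesis using q norm_ge_zero[of p] by linarith
    next
      case True
      have "- (1/k) *\<^sub>R (p - k *\<^sub>R b) \<in> C" using pC Crs subspace_scale by blast
      hence "d \<le> dist b (- (1/k) *\<^sub>R (p - k *\<^sub>R b))" unfolding d_def by (rule infdist_le)
      also have "b - (- (1/k) *\<^sub>R (p - k *\<^sub>R b)) = (1/k) *\<^sub>R p"
        using True by (simp add: algebra_simps)
      hence "dist b (- (1/k) *\<^sub>R (p - k *\<^sub>R b)) = norm p / k"
        using True by (simp add: dist_norm)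
      finally have "d \<le> norm p / k" .
      thus ?thesis using q True by (simp add: field_simps)
    qed
  qed
  obtain u where u: "bounded_linear u" and uG: "\<forall>(x,a)\<in>G0. u x = a"
    using real_HB[OF G0s G0b] by blast
  have uC: "u c = 0" if "c \<in> C" for c
  proof -
    have "(c, 0) \<in> G0" unfolding G0_def using that by (intro span_base) auto
    thus ?thesis using uG by auto
  qed
  have ub: "u b = d"
  proof -
    have "(b, d) \<in> G0" unfolding G0_def by (intro span_base) auto
    thus ?thesis using uG by auto
  qed
  define h0 where "h0 = (\<lambda>x. Complex (u x) (- u (scaleC \<i> x)))"
  have h0l: "bounded_linear h0" and h0c: "\<And>c x. h0 (scaleC c x) = c * h0 x"
    using complexify[OF u] unfolding h0_def by auto
  have h0b: "h0 b \<noteq> 0" using ub dpos unfolding h0_def by (simp add: complex_eq_iff)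
  define h where "h = (\<lambda>x. h0 x / h0 b)"
  have "h \<in> cdual"
    unfolding cdual_def h_def
    using bounded_linear_compose[OF bounded_linear_divide[of "h0 b"] h0l] h0c by auto
  moreover have "\<forall>c\<in>C. h c = 0"
  proof
    fix c assume c: "c \<in> C"
    have "scaleC \<i> c \<in> C" using Cs c cvs.subspace_scale by blast
    thus "h c = 0" using uC c unfolding h_def h0_def by (simp add: Complex_eq_0)
  qed
  moreover have "h b = 1" using h0b unfolding h_def by simp
  ultimately show ?thesis by blast
qed

lemma closed_add_line:
  fixes C :: "'a::complex_banach set"
  assumes Ccl: "closed C" and Cs: "cvs.subspace C"
  shows "closed {x. \<exists>k. x - scaleC k v \<in> C}"
proof (cases "v \<in> C")
  case True
  have "{x. \<exists>k. x - scaleC k v \<in> C} = C"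
  proof safe
    fix x k assume "x - scaleC k v \<in> C"
    moreover have "scaleC k v \<in> C" using True Cs cvs.subspace_scale by blast
    ultimately have "(x - scaleC k v) + scaleC k v \<in> C" using Cs cvs.subspace_add by blast
    thus "x \<in> C" by simp
  next
    fix x assume "x \<in> C" thus "\<exists>k. x - scaleC k v \<in> C" by (intro exI[of _ 0]) simp
  qed
  thus ?thesis using Ccl by simp
next
  case False
  have C0: "0 \<in> C" using Cs cvs.subspace_0 by blast
  define d where "d = infdist v C"
  have dpos: "d > 0" unfolding d_def using infdist_pos_not_in_closed[OF Ccl _ False] C0 by auto
  have key: "cmod k * d \<le> norm (c + scaleC k v)" if c: "c \<in> C" for c k
  proof (cases "k = 0")
    case True thus ?thesis by simp
  next
    case False
    have "scaleC (- inverse k) c \<in> C" using c Cs cvs.subspace_scale by blast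
    hence "d \<le> dist v (scaleC (- inverse k) c)" unfolding d_def by (rule infdist_le)
    also have "dist v (scaleC (- inverse k) c) = norm (v + scaleC (inverse k) c)"
      by (simp add: dist_norm cvs.scale_minus_left)
    finally have "cmod k * d \<le> cmod k * norm (v + scaleC (inverse k) c)"
      by (simp add: mult_left_mono)
    also have "cmod k * norm (v + scaleC (inverse k) c) = norm (scaleC k (v + scaleC (inverse k) c))"
      by (simp add: norm_scaleC)
    also have "scaleC k (v + scaleC (inverse k) c) = c + scaleC k v"
      using False by (simp add: scaleC_add_right scaleC_scaleC scaleC_one)
    finally show ?thesis .
  qed
  show ?thesis unfolding closed_sequential_limits
  proof (intro allI impI, elim conjE)
    fix z l assume zS: "\<forall>n. z n \<in> {x. \<exists>k. x - scaleC k v \<in> C}" and zl: "z \<longlonglongrightarrow> l"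
    hence "\<forall>n. \<exists>k. z n - scaleC k v \<in> C" by simp
    then obtain k where k0: "\<forall>n. z n - scaleC (k n) v \<in> C" by (rule choice[THEN exE])
    hence k: "\<And>n. z n - scaleC (k n) v \<in> C" by blast
    have "Cauchy z" using zl by (rule LIMSEQ_imp_Cauchy)
    have "Cauchy k"
    proof (rule CauchyI)
      fix e :: real assume e: "e > 0"
      obtain M where M: "\<And>m n. m \<ge> M \<Longrightarrow> n \<ge> M \<Longrightarrow> norm (z m - z n) < e * d"
        using CauchyD[OF \<open>Cauchy z\<close>, of "e * d"] e dpos by auto
      show "\<exists>M. \<forall>m\<ge>M. \<forall>n\<ge>M. norm (k m - k n) < e"
      proof (intro exI allI impI)
        fix m n assume mn: "m \<ge> M" "n \<ge> M"
        have cC: "(z m - scaleC (k m) v) - (z n - scaleC (k n) v) \<in> C"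
          using k Cs cvs.subspace_diff by blast
        have eq: "z m - z n = ((z m - scaleC (k m) v) - (z n - scaleC (k n) v)) + scaleC (k m - k n) v"
          by (simp add: cvs.scale_left_diff_distrib)
        have "cmod (k m - k n) * d \<le> norm (z m - z n)" by (subst eq) (rule key[OF cC])
        also have "\<dots> < e * d" using M mn by blast
        finally show "norm (k m - k n) < e" using dpos by simp
      qed
    qed
    then obtain t where kt: "k \<longlonglongrightarrow> t" using Cauchy_convergent_iff convergent_def by blast
    have "(\<lambda>n. scaleC (k n) v) \<longlonglongrightarrow> scaleC t v"
      using bounded_linear.tendsto[OF bounded_linear_scaleC_left kt] .
    hence lim: "(\<lambda>n. z n - scaleC (k n) v) \<longlonglongrightarrow> l - scaleC t v" using zl by (intro tendsto_diff)
    have "l - scaleC t v \<in> C" using closed_sequentially[OF Ccl _ lim] k by blast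
    thus "l \<in> {x. \<exists>k. x - scaleC k v \<in> C}" by blast
  qed
qed

lemma closed_span_finite:
  fixes F :: "'a::complex_banach set"
  assumes "closed F" "cvs.subspace F" "finite S"
  shows "closed (cvs.span (F \<union> S))"
  using assms(3)
proof induction
  case empty thus ?case using assms(1,2) by (simp add: cvs.span_eq_iff[THEN iffD2])
next
  case (insert v S)
  have "cvs.span (F \<union> insert v S) = cvs.span (insert v (F \<union> S))" by simp
  also have "\<dots> = {x. \<exists>k. x - scaleC k v \<in> cvs.span (F \<union> S)}" using cvs.span_breakdown_eq by blast
  finally show ?case using closed_add_line[OF insert.IH cvs.subspace_span] by simp
qed

lemma closure_csubspace:
  fixes C :: "'a::complex_banach set"
  assumes "cvs.subspace C" shows "cvs.subspace (closure C)"
  unfolding cvs.subspace_def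
proof (intro conjI ballI allI)
  show "0 \<in> closure C" using assms cvs.subspace_0 closure_subset by blast
next
  fix x y assume "x \<in> closure C" "y \<in> closure C"
  then obtain X Y where X: "\<forall>n. X n \<in> C" "X \<longlonglongrightarrow> x" and Y: "\<forall>n. Y n \<in> C" "Y \<longlonglongrightarrow> y"
    unfolding closure_sequential by blast
  have "(\<lambda>n. X n + Y n) \<longlonglongrightarrow> x + y" using X Y by (intro tendsto_add)
  moreover have "\<forall>n. X n + Y n \<in> C" using X Y assms cvs.subspace_add by blast
  ultimately show "x + y \<in> closure C" unfolding closure_sequential
    by (intro exI[of _ "\<lambda>n. X n + Y n"] conjI)
next
  fix c x assume "x \<in> closure C"
  then obtain X where X: "\<forall>n. X n \<in> C" "X \<longlonglongrightarrow> x" unfolding closure_sequential by blast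
  have "(\<lambda>n. scaleC c (X n)) \<longlonglongrightarrow> scaleC c x"
    using bounded_linear.tendsto[OF bounded_linear_scaleC X(2)] .
  moreover have "\<forall>n. scaleC c (X n) \<in> C" using X assms cvs.subspace_scale by blast
  ultimately show "scaleC c x \<in> closure C" unfolding closure_sequential
    by (intro exI[of _ "\<lambda>n. scaleC c (X n)"] conjI)
qed





lemma nestD:
  assumes "is_nest \<E>"
  shows "\<And>E. E \<in> \<E> \<Longrightarrow> cvs.subspace E" "\<And>E. E \<in> \<E> \<Longrightarrow> closed E"
    "\<And>E F. E \<in> \<E> \<Longrightarrow> F \<in> \<E> \<Longrightarrow> E \<subseteq> F \<or> F \<subseteq> E"
    "{0} \<in> \<E>" "\<And>\<F>. \<F> \<subseteq> \<E> \<Longrightarrow> \<Inter>\<F> \<in> \<E>"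
    "\<And>\<F>. \<F> \<subseteq> \<E> \<Longrightarrow> closure (cvs.span (\<Union>\<F>)) \<in> \<E>"
  using assms unfolding is_nest_def csubspace_eq closed_span_def cspan_eq by auto

lemma BXD:
  assumes "S \<in> BX"
  shows "bounded_linear S" "\<And>c x. S (scaleC c x) = scaleC c (S x)"
  using assms unfolding BX_def bounded_clinear_op_def by auto

lemma bimodD:
  assumes "is_bimodule \<E> \<J>"
  shows "\<J> \<subseteq> BX" "(\<lambda>x. 0) \<in> \<J>" "\<And>S T. S \<in> \<J> \<Longrightarrow> T \<in> \<J> \<Longrightarrow> (\<lambda>x. S x + T x) \<in> \<J>"
    "\<And>c T. T \<in> \<J> \<Longrightarrow> (\<lambda>x. scaleC c (T x)) \<in> \<J>"
    "\<And>A T. A \<in> nest_alg \<E> \<Longrightarrow> T \<in> \<J> \<Longrightarrow> T \<circ> A \<in> \<J>"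
  using assms unfolding is_bimodule_def op_subspace_def by auto

definition gen :: "('a::complex_banach \<Rightarrow> 'a) set \<Rightarrow> 'a set \<Rightarrow> 'a set" where
  "gen \<J> E = {T x | T x. T \<in> \<J> \<and> x \<in> E}"

lemma Phi_alt: "Phi \<J> E = closure (cvs.span (gen \<J> E))"
  unfolding Phi_def gen_def closed_span_def cspan_eq ..

lemma Phi_subspace: "cvs.subspace (Phi \<J> E)"
  unfolding Phi_alt by (intro closure_csubspace cvs.subspace_span)

lemma Phi_gen: "S \<in> \<J> \<Longrightarrow> x \<in> E \<Longrightarrow> S x \<in> Phi \<J> E"
proof -
  assume "S \<in> \<J>" "x \<in> E"
  hence "S x \<in> gen \<J> E" unfolding gen_def by blast
  hence "S x \<in> cvs.span (gen \<J> E)" by (rule cvs.span_base)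
  thus "S x \<in> Phi \<J> E" unfolding Phi_alt using closure_subset by (rule subsetD[rotated])
qed

lemma rank1_nest_alg:
  assumes N: "is_nest \<E>" and F: "F \<in> \<E>" and h: "h \<in> cdual" and hF: "\<forall>z\<in>F. h z = 0"
    and y: "\<forall>F'\<in>\<E>. \<not> F' \<subseteq> F \<longrightarrow> y \<in> F'"
  shows "(\<lambda>z. scaleC (h z) y) \<in> nest_alg \<E>"
proof -
  have hl: "bounded_linear h" and hc: "\<And>c x. h (scaleC c x) = c * h x" using h unfolding cdual_def by auto
  interpret hl: bounded_linear h by fact
  have bl: "bounded_linear (\<lambda>z. scaleC (h z) y)"
    using bounded_linear_compose[OF bounded_linear_scaleC_left[of y] hl] by (simp add: o_def)
  have "(\<lambda>z. scaleC (h z) y) \<in> BX"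
    unfolding BX_def bounded_clinear_op_def using bl by (simp add: hc scaleC_scaleC)
  moreover have "(\<lambda>z. scaleC (h z) y) ` E \<subseteq> E" if E: "E \<in> \<E>" for E
  proof (cases "E \<subseteq> F")
    case True
    have "0 \<in> E" using nestD(1)[OF N E] cvs.subspace_0 by blast
    thus ?thesis using True hF by auto
  next
    case False
    hence "y \<in> E" using y E by blast
    thus ?thesis using nestD(1)[OF N E] cvs.subspace_scale by blast
  qed
  ultimately show ?thesis unfolding nest_alg_def by blast
qed

lemma core:
  assumes N: "is_nest \<E>" and M: "is_bimodule \<E> \<J>" and F: "F \<in> \<E>"
    and Y: "\<forall>y\<in>Y. \<forall>F'\<in>\<E>. \<not> F' \<subseteq> F \<longrightarrow> y \<in> F'"
    and b: "b \<notin> closure (cvs.span (F \<union> B0))"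
    and z: "z \<in> closure (cvs.span (gen \<J> Y))" and d: "\<delta> > 0"
  shows "\<exists>R\<in>\<J>. norm (R b - z) < \<delta> \<and> (\<forall>b'\<in>B0. R b' = 0)"
proof -
  obtain h where h: "h \<in> cdual" and hC: "\<forall>c\<in>cvs.span (F \<union> B0). h c = 0" and hb: "h b = 1"
    using complex_HB[OF cvs.subspace_span b] by blast
  have "F \<union> B0 \<subseteq> cvs.span (F \<union> B0)" by (rule cvs.span_superset)
  hence hF: "\<forall>z\<in>F. h z = 0" and hB0: "\<forall>z\<in>B0. h z = 0" using hC by auto
  have hl: "bounded_linear h" using h unfolding cdual_def by auto
  have h0: "h 0 = 0" using linear_0[OF bounded_linear.linear[OF hl]] .
  define D where "D = {w. \<exists>R\<in>\<J>. R b = w \<and> (\<forall>b'\<in>B0. R b' = 0)}"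
  have Dsub: "cvs.subspace D"
    unfolding cvs.subspace_def
  proof (intro conjI ballI allI)
    show "0 \<in> D" unfolding D_def using bimodD(2)[OF M] by force
  next
    fix x y assume "x \<in> D" "y \<in> D"
    then obtain R1 R2 where "R1\<in>\<J>" "R2\<in>\<J>" "R1 b = x" "R2 b = y" "\<forall>b'\<in>B0. R1 b' = 0" "\<forall>b'\<in>B0. R2 b' = 0"
      unfolding D_def by blast
    thus "x + y \<in> D" unfolding D_def using bimodD(3)[OF M] by (intro CollectI bexI[of _ "\<lambda>x. R1 x + R2 x"]) auto
  next
    fix c x assume "x \<in> D"
    then obtain R1 where "R1\<in>\<J>" "R1 b = x" "\<forall>b'\<in>B0. R1 b' = 0"
      unfolding D_def by blast
    thus "scaleC c x \<in> D" unfolding D_def using bimodD(4)[OF M] by (intro CollectI bexI[of _ "\<lambda>x. scaleC c (R1 x)"]) auto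
  qed
  have "gen \<J> Y \<subseteq> D"
  proof
    fix w assume "w \<in> gen \<J> Y"
    then obtain S y where S: "S \<in> \<J>" and yY: "y \<in> Y" and w: "w = S y" unfolding gen_def by blast
    have "\<forall>F'\<in>\<E>. \<not> F' \<subseteq> F \<longrightarrow> y \<in> F'" using Y yY by (rule bspec)
    hence A: "(\<lambda>z. scaleC (h z) y) \<in> nest_alg \<E>" by (rule rank1_nest_alg[OF N F h hF])
    have SA: "S \<circ> (\<lambda>z. scaleC (h z) y) \<in> \<J>" by (rule bimodD(5)[OF M A S])
    have "S \<in> BX" using bimodD(1)[OF M] S by (rule subsetD)
    hence "bounded_linear S" by (rule BXD(1))
    hence S0: "S 0 = 0" by (rule linear_0[OF bounded_linear.linear])
    show "w \<in> D" unfolding D_def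
      by (intro CollectI bexI[OF _ SA]) (simp add: w hb hB0 scaleC_one S0)
  qed
  hence "cvs.span (gen \<J> Y) \<subseteq> D" using cvs.span_minimal Dsub by blast
  hence "z \<in> closure D" using z closure_mono by blast
  then obtain w where "w \<in> D" "dist w z < \<delta>" using closure_approachable[THEN iffD1, rule_format, OF _ d] by blast
  thus ?thesis unfolding D_def by (auto simp: dist_norm)
qed





lemma BX_add: "S \<in> BX \<Longrightarrow> S (x + y) = S x + S y"
  by (rule linear_add[OF bounded_linear.linear[OF BXD(1)]])
lemma BX_diff: "S \<in> BX \<Longrightarrow> S (x - y) = S x - S y"
  by (rule linear_diff[OF bounded_linear.linear[OF BXD(1)]])
lemma BX_0: "S \<in> BX \<Longrightarrow> S 0 = 0"
  by (rule linear_0[OF bounded_linear.linear[OF BXD(1)]])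

lemma join_approx:
  assumes N: "is_nest \<E>" and M: "is_bimodule \<E> \<J>" and GE: "G \<subseteq> \<E>" and Gne: "G \<noteq> {}"
    and z: "z \<in> Phi \<J> (closure (cvs.span (\<Union>G)))"
  shows "z \<in> closure (\<Union>F\<in>G. cvs.span (gen \<J> F))"
proof -
  let ?M = "\<Union>F\<in>G. cvs.span (gen \<J> F)"
  have JB: "\<J> \<subseteq> BX" by (rule bimodD(1)[OF M])
  have genmono: "gen \<J> F1 \<subseteq> gen \<J> F2" if "F1 \<subseteq> F2" for F1 F2
    using that unfolding gen_def by blast
  have Msub: "cvs.subspace ?M"
    unfolding cvs.subspace_def
  proof (intro conjI ballI allI)
    obtain F0 where "F0 \<in> G" using Gne by auto
    moreover have "0 \<in> cvs.span (gen \<J> F0)" by (rule cvs.span_zero)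
    ultimately show "0 \<in> ?M" by blast
  next
    fix x y assume "x \<in> ?M" "y \<in> ?M"
    then obtain F1 F2 where F: "F1 \<in> G" "F2 \<in> G" "x \<in> cvs.span (gen \<J> F1)" "y \<in> cvs.span (gen \<J> F2)"
      by blast
    have "F1 \<subseteq> F2 \<or> F2 \<subseteq> F1" using nestD(3)[OF N] F(1,2) GE by blast
    thus "x + y \<in> ?M"
    proof
      assume "F1 \<subseteq> F2"
      hence "x \<in> cvs.span (gen \<J> F2)" using F(3) cvs.span_mono[OF genmono] by blast
      hence "x + y \<in> cvs.span (gen \<J> F2)" using F(4) by (rule cvs.span_add)
      thus ?thesis using F(2) by blast
    next
      assume "F2 \<subseteq> F1"
      hence "y \<in> cvs.span (gen \<J> F1)" using F(4) cvs.span_mono[OF genmono] by blast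
      hence "x + y \<in> cvs.span (gen \<J> F1)" using F(3) by (intro cvs.span_add)
      thus ?thesis using F(1) by blast
    qed
  next
    fix c x assume "x \<in> ?M"
    then obtain F1 where F: "F1 \<in> G" "x \<in> cvs.span (gen \<J> F1)" by blast
    hence "scaleC c x \<in> cvs.span (gen \<J> F1)" by (intro cvs.span_scale)
    thus "scaleC c x \<in> ?M" using F(1) by blast
  qed
  have cM: "cvs.subspace (closure ?M)" by (rule closure_csubspace[OF Msub])
  define P where "P = {y. \<forall>S\<in>\<J>. S y \<in> closure ?M}"
  have Psub: "cvs.subspace P"
    unfolding cvs.subspace_def
  proof (intro conjI ballI allI)
    show "0 \<in> P" unfolding P_def
    proof (intro CollectI ballI)
      fix S assume "S \<in> \<J>" hence "S \<in> BX" using JB by blast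
      hence "S 0 = 0" by (rule BX_0)
      thus "S 0 \<in> closure ?M" using cvs.subspace_0[OF cM] by simp
    qed
  next
    fix x y assume xy: "x \<in> P" "y \<in> P"
    show "x + y \<in> P" unfolding P_def
    proof (intro CollectI ballI)
      fix S assume S: "S \<in> \<J>" hence "S \<in> BX" using JB by blast
      hence "S (x + y) = S x + S y" by (rule BX_add)
      moreover have "S x \<in> closure ?M" "S y \<in> closure ?M" using xy S unfolding P_def by auto
      ultimately show "S (x + y) \<in> closure ?M" using cvs.subspace_add[OF cM] by simp
    qed
  next
    fix c x assume x: "x \<in> P"
    show "scaleC c x \<in> P" unfolding P_def
    proof (intro CollectI ballI)
      fix S assume S: "S \<in> \<J>" hence "S \<in> BX" using JB by blast
      hence "S (scaleC c x) = scaleC c (S x)" by (rule BXD(2))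
      moreover have "S x \<in> closure ?M" using x S unfolding P_def by auto
      ultimately show "S (scaleC c x) \<in> closure ?M" using cvs.subspace_scale[OF cM] by simp
    qed
  qed
  have "P = (\<Inter>S\<in>\<J>. S -` closure ?M)" unfolding P_def by auto
  moreover have "closed (S -` closure ?M)" if "S \<in> \<J>" for S
  proof -
    have "bounded_linear S" using that JB BXD(1) by blast
    thus ?thesis by (intro continuous_closed_vimage closed_closure linear_continuous_at)
  qed
  ultimately have Pcl: "closed P" by auto
  have "\<Union>G \<subseteq> P"
  proof
    fix y assume "y \<in> \<Union>G"
    then obtain F where F: "F \<in> G" "y \<in> F" by blast
    show "y \<in> P" unfolding P_def
    proof (intro CollectI ballI)
      fix S assume "S \<in> \<J>"
      hence "S y \<in> gen \<J> F" using F unfolding gen_def by blast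
      hence "S y \<in> cvs.span (gen \<J> F)" by (rule cvs.span_base)
      hence "S y \<in> ?M" using F(1) by blast
      thus "S y \<in> closure ?M" by (rule closure_subset[THEN subsetD])
    qed
  qed
  hence "cvs.span (\<Union>G) \<subseteq> P" using Psub by (rule cvs.span_minimal)
  hence KP: "closure (cvs.span (\<Union>G)) \<subseteq> P" using Pcl by (rule closure_minimal)
  have "gen \<J> (closure (cvs.span (\<Union>G))) \<subseteq> closure ?M"
    using KP unfolding gen_def P_def by blast
  hence sp: "cvs.span (gen \<J> (closure (cvs.span (\<Union>G)))) \<subseteq> closure ?M" using cM by (rule cvs.span_minimal)
  have "Phi \<J> (closure (cvs.span (\<Union>G))) \<subseteq> closure ?M"
    unfolding Phi_alt using sp closed_closure by (rule closure_minimal)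
  thus ?thesis using z by blast
qed

lemma finite_eps:
  assumes "finite A" "\<forall>x\<in>A. \<exists>\<epsilon>>0. P x \<epsilon>"
    and mono: "\<And>x \<epsilon> \<epsilon>'. P x \<epsilon> \<Longrightarrow> 0 < \<epsilon>' \<Longrightarrow> \<epsilon>' \<le> \<epsilon> \<Longrightarrow> P x \<epsilon>'"
  shows "\<exists>\<epsilon>>0. \<forall>x\<in>A. P x (\<epsilon>::real)"
  using assms(1,2)
proof induction
  case empty show ?case by (intro exI[of _ 1]) simp
next
  case (insert a A)
  obtain e1 where e1: "e1 > 0" "\<forall>x\<in>A. P x e1" using insert by blast
  obtain e2 where e2: "e2 > 0" "P a e2" using insert by blast
  have "P a (min e1 e2)" using mono[OF e2(2)] e1 e2 by simp
  moreover have "\<forall>x\<in>A. P x (min e1 e2)"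
  proof
    fix x assume "x \<in> A" hence "P x e1" using e1 by blast
    thus "P x (min e1 e2)" using mono[of x e1 "min e1 e2"] e1 e2 by simp
  qed
  ultimately show ?case using e1 e2 by (intro exI[of _ "min e1 e2"]) simp
qed

lemma approx_span:
  assumes JB: "\<J> \<subseteq> BX" and T: "T \<in> BX"
    and A0: "\<forall>\<delta>>0. \<exists>S\<in>\<J>. \<forall>x\<in>A0. norm (S x - T x) < \<delta>"
    and A: "finite A" "A \<subseteq> cvs.span A0"
  shows "\<forall>\<delta>>0. \<exists>S\<in>\<J>. \<forall>x\<in>A. norm (S x - T x) < \<delta>"
proof (intro allI impI)
  fix \<delta> :: real assume d: "\<delta> > 0"
  define Q where "Q x \<longleftrightarrow> (\<forall>\<delta>>0. \<exists>\<epsilon>>0. \<forall>S\<in>BX. (\<forall>a\<in>A0. norm (S a - T a) < \<epsilon>) \<longrightarrow> norm (S x - T x) < \<delta>)" for x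
  have Qs: "cvs.subspace (Collect Q)"
    unfolding cvs.subspace_def
  proof (intro conjI ballI allI)
    show "0 \<in> Collect Q" unfolding Q_def mem_Collect_eq
    proof (intro allI impI exI[of _ 1] conjI ballI)
      fix e :: real and S :: "'a \<Rightarrow> 'a" assume "e > 0" "S \<in> BX"
      thus "norm (S 0 - T 0) < e" using BX_0[of S] BX_0[OF T] by simp
    qed simp
  next
    fix x y assume "x \<in> Collect Q" "y \<in> Collect Q"
    hence Qx: "Q x" and Qy: "Q y" by auto
    show "x + y \<in> Collect Q" unfolding mem_Collect_eq Q_def
    proof (intro allI impI)
      fix e :: real assume e: "e > 0"
      obtain e1 where e1: "e1 > 0" "\<forall>S\<in>BX. (\<forall>a\<in>A0. norm (S a - T a) < e1) \<longrightarrow> norm (S x - T x) < e/2"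
        using Qx[unfolded Q_def, rule_format, of "e/2"] e by auto
      obtain e2 where e2: "e2 > 0" "\<forall>S\<in>BX. (\<forall>a\<in>A0. norm (S a - T a) < e2) \<longrightarrow> norm (S y - T y) < e/2"
        using Qy e unfolding Q_def by (meson half_gt_zero)
      show "\<exists>\<epsilon>>0. \<forall>S\<in>BX. (\<forall>a\<in>A0. norm (S a - T a) < \<epsilon>) \<longrightarrow> norm (S (x + y) - T (x + y)) < e"
      proof (intro exI[of _ "min e1 e2"] conjI ballI impI)
        show "min e1 e2 > 0" using e1 e2 by simp
        fix S assume S: "S \<in> BX" and h: "\<forall>a\<in>A0. norm (S a - T a) < min e1 e2"
        have "norm (S x - T x) < e/2" using e1(2) S h by auto
        moreover have "norm (S y - T y) < e/2" using e2(2) S h by auto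
        moreover have "S (x + y) - T (x + y) = (S x - T x) + (S y - T y)"
          using BX_add[OF S] BX_add[OF T] by simp
        ultimately show "norm (S (x + y) - T (x + y)) < e"
          using norm_triangle_lt[of "S x - T x" "S y - T y" e] by simp
      qed
    qed
  next
    fix c x assume "x \<in> Collect Q"
    hence Qx: "Q x" by auto
    show "scaleC c x \<in> Collect Q" unfolding mem_Collect_eq Q_def
    proof (intro allI impI)
      fix e :: real assume e: "e > 0"
      have eq: "S (scaleC c x) - T (scaleC c x) = scaleC c (S x - T x)" if "S \<in> BX" for S
        using BXD(2)[OF that] BXD(2)[OF T] by (simp add: cvs.scale_right_diff_distrib)
      show "\<exists>\<epsilon>>0. \<forall>S\<in>BX. (\<forall>a\<in>A0. norm (S a - T a) < \<epsilon>) \<longrightarrow> norm (S (scaleC c x) - T (scaleC c x)) < e"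
      proof (cases "c = 0")
        case True
        thus ?thesis using eq e by (intro exI[of _ 1]) (simp add: norm_scaleC)
      next
        case False
        hence cpos: "cmod c > 0" by simp
        obtain e1 where e1: "e1 > 0" "\<forall>S\<in>BX. (\<forall>a\<in>A0. norm (S a - T a) < e1) \<longrightarrow> norm (S x - T x) < e / cmod c"
          using Qx[unfolded Q_def, rule_format, of "e / cmod c"] e cpos by auto
        show ?thesis
        proof (intro exI[of _ e1] conjI ballI impI)
          show "e1 > 0" by fact
          fix S assume S: "S \<in> BX" and h: "\<forall>a\<in>A0. norm (S a - T a) < e1"
          have "norm (S x - T x) < e / cmod c" using e1(2) S h by auto
          hence "cmod c * norm (S x - T x) < e" using cpos by (simp add: field_simps)
          thus "norm (S (scaleC c x) - T (scaleC c x)) < e" using eq[OF S] by (simp add: norm_scaleC)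
        qed
      qed
    qed
  qed
  have QA0: "Q x" if "x \<in> cvs.span A0" for x
    using that
  proof (induction rule: cvs.span_induct)
    case base show ?case by (rule Qs)
  next
    case (step x)
    show ?case unfolding Q_def
    proof (intro allI impI)
      fix e :: real assume "e > 0"
      thus "\<exists>\<epsilon>>0. \<forall>S\<in>BX. (\<forall>a\<in>A0. norm (S a - T a) < \<epsilon>) \<longrightarrow> norm (S x - T x) < e"
        using step by (intro exI[of _ e]) auto
    qed
  qed
  have "\<exists>\<epsilon>>0. \<forall>x\<in>A. \<forall>S\<in>BX. (\<forall>a\<in>A0. norm (S a - T a) < \<epsilon>) \<longrightarrow> norm (S x - T x) < \<delta>"
  proof (rule finite_eps[OF A(1)])
    show "\<forall>x\<in>A. \<exists>\<epsilon>>0. \<forall>S\<in>BX. (\<forall>a\<in>A0. norm (S a - T a) < \<epsilon>) \<longrightarrow> norm (S x - T x) < \<delta>"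
    proof
      fix x assume "x \<in> A"
      hence "x \<in> cvs.span A0" by (rule subsetD[OF A(2)])
      hence "Q x" by (rule QA0)
      thus "\<exists>\<epsilon>>0. \<forall>S\<in>BX. (\<forall>a\<in>A0. norm (S a - T a) < \<epsilon>) \<longrightarrow> norm (S x - T x) < \<delta>"
        using d unfolding Q_def by blast
    qed
  next
    fix x \<epsilon> \<epsilon>' assume "\<forall>S\<in>BX. (\<forall>a\<in>A0. norm (S a - T a) < \<epsilon>) \<longrightarrow> norm (S x - T x) < \<delta>"
      "0 < \<epsilon>'" "\<epsilon>' \<le> \<epsilon>"
    thus "\<forall>S\<in>BX. (\<forall>a\<in>A0. norm (S a - T a) < \<epsilon>') \<longrightarrow> norm (S x - T x) < \<delta>"
      by (auto intro: less_le_trans)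
  qed
  then obtain \<epsilon> where e: "\<epsilon> > 0" "\<forall>x\<in>A. \<forall>S\<in>BX. (\<forall>a\<in>A0. norm (S a - T a) < \<epsilon>) \<longrightarrow> norm (S x - T x) < \<delta>"
    by blast
  obtain S where S: "S \<in> \<J>" "\<forall>a\<in>A0. norm (S a - T a) < \<epsilon>" using A0 e(1) by blast
  have "S \<in> BX" using S(1) JB by blast
  thus "\<exists>S\<in>\<J>. \<forall>x\<in>A. norm (S x - T x) < \<delta>" using S e(2) by blast
qed





lemma approx_indep:
  assumes N: "is_nest \<E>" and M: "is_bimodule \<E> \<J>" and T: "T \<in> Mop \<E> (Phi \<J>)"
  shows "finite B \<Longrightarrow> cvs.independent B \<Longrightarrow> \<forall>\<delta>>0. \<exists>S\<in>\<J>. \<forall>x\<in>B. norm (S x - T x) < \<delta>"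
proof (induction "card B" arbitrary: B rule: less_induct)
  case less
  have TB: "T \<in> BX" using T unfolding Mop_def by blast
  have TE: "T x \<in> Phi \<J> E" if "E \<in> \<E>" "x \<in> E" for E x
    using T that unfolding Mop_def by blast
  have JB: "\<J> \<subseteq> BX" by (rule bimodD(1)[OF M])
  show ?case
  proof (cases "B = {}")
    case True
    thus ?thesis using bimodD(2)[OF M] by (intro allI impI bexI[of _ "\<lambda>x. 0"]) auto
  next
    case False
    define V where "V = cvs.span B"
    have Vs: "cvs.subspace V" unfolding V_def by simp
    define G where "G = {F\<in>\<E>. \<not> V \<subseteq> F}"
    have GE: "G \<subseteq> \<E>" unfolding G_def by auto
    obtain b0 where b0: "b0 \<in> B" using False by auto
    have "b0 \<noteq> 0" using less.prems(2) b0 cvs.dependent_zero by blast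
    moreover have "b0 \<in> V" unfolding V_def using b0 by (rule cvs.span_base)
    ultimately have "\<not> V \<subseteq> {0}" by blast
    hence zG: "{0} \<in> G" using nestD(4)[OF N] unfolding G_def by blast
    define Pr where "Pr = (\<lambda>p. fst p \<in> G \<and> snd p \<subseteq> fst p \<inter> V \<and> cvs.independent (snd p))"
    have bnd: "card (snd p) < card B + 1" if "Pr p" for p
    proof -
      have "snd p \<subseteq> cvs.span B" using that unfolding Pr_def V_def by blast
      hence "card (snd p) \<le> card B"
        using cvs.independent_span_bound[OF less.prems(1)] that unfolding Pr_def by blast
      thus ?thesis by simp
    qed
    have "Pr ({0}, {})" unfolding Pr_def using zG cvs.independent_empty by auto
    then obtain p0 where p0: "Pr p0" and pmax: "\<forall>p. Pr p \<longrightarrow> card (snd p) \<le> card (snd p0)"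
      using ex_has_greatest_nat[of Pr "({0}, {})" "\<lambda>p. card (snd p)" "card B + 1"] bnd by blast
    define F0 where "F0 = fst p0"
    define I where "I = snd p0"
    have F0G: "F0 \<in> G" and IF0: "I \<subseteq> F0" and IV: "I \<subseteq> V" and Iind: "cvs.independent I"
      using p0 unfolding Pr_def F0_def I_def by auto
    have F0E: "F0 \<in> \<E>" using F0G GE by blast
    have finI: "finite I"
      using cvs.independent_span_bound[OF less.prems(1) Iind] IV unfolding V_def by blast
    have spanI: "cvs.span I \<subseteq> F0" using IF0 nestD(1)[OF N F0E] by (rule cvs.span_minimal)
    have W: "F \<inter> V \<subseteq> cvs.span I" if FG: "F \<in> G" for F
    proof
      fix x assume x: "x \<in> F \<inter> V"
      show "x \<in> cvs.span I"
      proof (rule ccontr)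
        assume xI: "x \<notin> cvs.span I"
        define F1 where "F1 = (if F \<subseteq> F0 then F0 else F)"
        have FE: "F \<in> \<E>" using FG GE by blast
        have ch: "F \<subseteq> F0 \<or> F0 \<subseteq> F" using nestD(3)[OF N FE F0E] .
        have F1G: "F1 \<in> G" using FG F0G unfolding F1_def by simp
        have FF1: "F \<subseteq> F1" and F0F1: "F0 \<subseteq> F1" using ch unfolding F1_def by auto
        have "Pr (F1, insert x I)" unfolding Pr_def
          using F1G FF1 F0F1 x IF0 IV cvs.independent_insertI[OF xI Iind] by auto
        hence "card (insert x I) \<le> card I" using pmax unfolding I_def by fastforce
        moreover have "x \<notin> I" using xI cvs.span_superset by blast
        ultimately show False using finI by simp
      qed
    qed
    obtain B' where B': "I \<subseteq> B'" "B' \<subseteq> V" "cvs.independent B'" "V \<subseteq> cvs.span B'"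
      using cvs.maximal_independent_subset_extend[OF IV Iind] by blast
    have B'b: "finite B' \<and> card B' \<le> card B"
      using cvs.independent_span_bound[OF less.prems(1) B'(3)] B'(2) unfolding V_def by blast
    obtain b where b: "b \<in> B'" "b \<notin> I"
    proof (cases "B' \<subseteq> I")
      case True
      hence "cvs.span B' \<subseteq> cvs.span I" by (rule cvs.span_mono)
      hence "V \<subseteq> F0" using B'(4) spanI by blast
      thus ?thesis using F0G unfolding G_def by blast
    next
      case False thus ?thesis using that by blast
    qed
    define B0 where "B0 = B' - {b}"
    have B0fin: "finite B0" using B'b unfolding B0_def by blast
    have B0ind: "cvs.independent B0" using B'(3) unfolding B0_def by (rule cvs.independent_mono) blast
    have B0card: "card B0 < card B"
      using card_Diff1_less[of B' b] B'b b(1) unfolding B0_def by linarith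
    have IH: "\<forall>\<delta>>0. \<exists>S\<in>\<J>. \<forall>x\<in>B0. norm (S x - T x) < \<delta>"
      using less.hyps[OF B0card B0fin B0ind] .
    have IB0: "I \<subseteq> B0" using B'(1) b(2) unfolding B0_def by blast
    have bV: "b \<in> V" using b(1) B'(2) by blast
    have B0V: "cvs.span B0 \<subseteq> V" using Vs B'(2) unfolding B0_def by (intro cvs.span_minimal) auto
    have notin: "b \<notin> closure (cvs.span (F \<union> B0))" if FG: "F \<in> G" for F
    proof
      assume bc: "b \<in> closure (cvs.span (F \<union> B0))"
      have FE: "F \<in> \<E>" using FG GE by blast
      have "closed (cvs.span (F \<union> B0))"
        by (rule closed_span_finite[OF nestD(2)[OF N FE] nestD(1)[OF N FE] B0fin])
      hence "b \<in> cvs.span (F \<union> B0)" using bc by simp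
      then obtain f w where fw: "b = f + w" "f \<in> cvs.span F" "w \<in> cvs.span B0"
        unfolding cvs.span_Un by blast
      have fF: "f \<in> F" using fw(2) nestD(1)[OF N FE] by (simp add: cvs.span_eq_iff[THEN iffD2])
      have "w \<in> V" using fw(3) B0V by blast
      hence "f \<in> V" using fw(1) bV cvs.subspace_diff[OF Vs, of b w] by simp
      hence "f \<in> cvs.span I" using W[OF FG] fF by blast
      hence "f \<in> cvs.span B0" using cvs.span_mono[OF IB0] by blast
      hence "b \<in> cvs.span B0" using fw cvs.span_add by blast
      hence "cvs.dependent B'" unfolding cvs.dependent_def B0_def using b(1) by blast
      thus False using B'(3) by blast
    qed
    have B'approx: "\<forall>\<delta>>0. \<exists>S\<in>\<J>. \<forall>x\<in>B'. norm (S x - T x) < \<delta>"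
    proof (intro allI impI)
      fix \<delta> :: real assume d: "\<delta> > 0"
      obtain S' where S': "S' \<in> \<J>" "\<forall>x\<in>B0. norm (S' x - T x) < \<delta>/2"
        using IH d by (meson half_gt_zero)
      define z where "z = T b - S' b"
      define K where "K = closure (cvs.span (\<Union>G))"
      have KE: "K \<in> \<E>" unfolding K_def by (rule nestD(6)[OF N GE])
      have GK: "F \<subseteq> K" if "F \<in> G" for F
      proof -
        have "F \<subseteq> \<Union>G" using that by blast
        also have "\<dots> \<subseteq> cvs.span (\<Union>G)" by (rule cvs.span_superset)
        also have "\<dots> \<subseteq> K" unfolding K_def by (rule closure_subset)
        finally show ?thesis .
      qed
      have zK: "z \<in> Phi \<J> E" if "E \<in> \<E>" "b \<in> E" for E
      proof -
        have "T b \<in> Phi \<J> E" using TE that by blast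
        moreover have "S' b \<in> Phi \<J> E" using Phi_gen[OF S'(1) that(2)] .
        ultimately show ?thesis unfolding z_def using cvs.subspace_diff[OF Phi_subspace] by blast
      qed
      have "\<exists>R\<in>\<J>. norm (R b - z) < \<delta> \<and> (\<forall>b'\<in>B0. R b' = 0)"
      proof (cases "V \<subseteq> K")
        case True
        hence "z \<in> Phi \<J> K" using zK[OF KE] bV by blast
        hence "z \<in> closure (\<Union>F\<in>G. cvs.span (gen \<J> F))"
          unfolding K_def using join_approx[OF N M GE] zG by blast
        hence ca: "\<forall>e>0. \<exists>y\<in>(\<Union>F\<in>G. cvs.span (gen \<J> F)). dist y z < e"
          by (rule closure_approachable[THEN iffD1])
        have d2: "\<delta>/2 > 0" using d by simp
        obtain m where m: "m \<in> (\<Union>F\<in>G. cvs.span (gen \<J> F))" "dist m z < \<delta>/2"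
          using ca[rule_format, OF d2] by blast
        then obtain F where FG: "F \<in> G" and mF: "m \<in> cvs.span (gen \<J> F)" by blast
        have FE: "F \<in> \<E>" using FG GE by blast
        have mc: "m \<in> closure (cvs.span (gen \<J> F))" using mF closure_subset by blast
        have Yc: "\<forall>y\<in>F. \<forall>F'\<in>\<E>. \<not> F' \<subseteq> F \<longrightarrow> y \<in> F'"
          using nestD(3)[OF N FE] by blast
        obtain R where R: "R \<in> \<J>" "norm (R b - m) < \<delta>/2" "\<forall>b'\<in>B0. R b' = 0"
          using core[OF N M FE Yc notin[OF FG] mc, of "\<delta>/2"] d by auto
        have "norm (R b - z) \<le> norm (R b - m) + norm (m - z)"
          using norm_triangle_ineq[of "R b - m" "m - z"] by simp
        also have "\<dots> < \<delta>" using R(2) m(2) by (simp add: dist_norm)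
        finally show ?thesis using R by blast
      next
        case False
        hence KG: "K \<in> G" using KE unfolding G_def by blast
        define Y where "Y = \<Inter>{F'\<in>\<E>. \<not> F' \<subseteq> K}"
        have YE: "Y \<in> \<E>" unfolding Y_def by (rule nestD(5)[OF N]) blast
        have bY: "b \<in> Y" unfolding Y_def
        proof
          fix F' assume F': "F' \<in> {F'\<in>\<E>. \<not> F' \<subseteq> K}"
          have "V \<subseteq> F'"
          proof (rule ccontr)
            assume "\<not> V \<subseteq> F'"
            hence "F' \<in> G" using F' unfolding G_def by blast
            hence "F' \<subseteq> K" by (rule GK)
            thus False using F' by blast
          qed
          thus "b \<in> F'" using bV by blast
        qed
        have zY: "z \<in> closure (cvs.span (gen \<J> Y))" using zK[OF YE bY] unfolding Phi_alt .
        have Yc: "\<forall>y\<in>Y. \<forall>F'\<in>\<E>. \<not> F' \<subseteq> K \<longrightarrow> y \<in> F'" unfolding Y_def by blast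
        show ?thesis using core[OF N M KE Yc notin[OF KG] zY d] .
      qed
      then obtain R where R: "R \<in> \<J>" "norm (R b - z) < \<delta>" "\<forall>b'\<in>B0. R b' = 0" by blast
      have SJ: "(\<lambda>x. S' x + R x) \<in> \<J>" using bimodD(3)[OF M S'(1) R(1)] .
      show "\<exists>S\<in>\<J>. \<forall>x\<in>B'. norm (S x - T x) < \<delta>"
      proof (intro bexI[OF _ SJ] ballI)
        fix x assume x: "x \<in> B'"
        show "norm (S' x + R x - T x) < \<delta>"
        proof (cases "x = b")
          case True
          have "S' x + R x - T x = R b - z" unfolding z_def True by simp
          thus ?thesis using R(2) by simp
        next
          case False
          hence xB0: "x \<in> B0" using x unfolding B0_def by blast
          hence "norm (S' x - T x) < \<delta>/2" using S'(2) by blast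
          thus ?thesis using R(3) xB0 d by simp
        qed
      qed
    qed
    have "B \<subseteq> cvs.span B'" using B'(4) cvs.span_superset[of B] unfolding V_def by blast
    thus ?thesis using approx_span[OF JB TB B'approx less.prems(1)] by blast
  qed
qed




theorem mainTheorem12:
  fixes \<E> :: "'a::complex_banach set set" and \<J> :: "('a \<Rightarrow> 'a) set"
  assumes "is_nest \<E>"
    and "is_bimodule \<E> \<J>"
    and "wot_closed \<J>"
  shows "\<J> = Mop \<E> (Phi \<J>) \<and> \<J> = Ref \<J>"
proof -
  note N = assms(1) and M = assms(2) and Wc = assms(3)
  have JB: "\<J> \<subseteq> BX" by (rule bimodD(1)[OF M])
  have JM: "\<J> \<subseteq> Mop \<E> (Phi \<J>)"
  proof
    fix T assume T: "T \<in> \<J>"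
    have "T \<in> BX" using T JB by blast
    moreover have "\<forall>E\<in>\<E>. T ` E \<subseteq> Phi \<J> E" using Phi_gen[OF T] by blast
    ultimately show "T \<in> Mop \<E> (Phi \<J>)" unfolding Mop_def by blast
  qed
  have MJ: "Mop \<E> (Phi \<J>) \<subseteq> \<J>"
  proof
    fix T assume T: "T \<in> Mop \<E> (Phi \<J>)"
    have TB: "T \<in> BX" using T unfolding Mop_def by blast
    have "T \<in> wot_closure \<J>" unfolding wot_closure_def
    proof (intro CollectI conjI allI impI TB)
      fix P :: "('a \<times> ('a \<Rightarrow> complex)) set" and e :: real assume H: "finite P \<and> P \<subseteq> UNIV \<times> cdual \<and> e > 0"
      have finP: "finite P" and Pd: "P \<subseteq> UNIV \<times> cdual" and e: "e > 0" using H by auto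
      define A where "A = fst ` P"
      have finA: "finite A" unfolding A_def using finP by simp
      have "{} \<subseteq> cvs.span A" by simp
      then obtain B where B: "B \<subseteq> cvs.span A" "cvs.independent B" "cvs.span A \<subseteq> cvs.span B"
        using cvs.maximal_independent_subset_extend[of "{}" "cvs.span A"] cvs.independent_empty by metis
      have "B \<subseteq> cvs.span A" using B(1) .
      have finB: "finite B" using cvs.independent_span_bound[OF finA B(2) B(1)] by blast
      have appB: "\<forall>\<delta>>0. \<exists>S\<in>\<J>. \<forall>x\<in>B. norm (S x - T x) < \<delta>"
        using approx_indep[OF N M T finB B(2)] .
      have "A \<subseteq> cvs.span B" using B(3) cvs.span_superset[of A] by blast
      hence appA: "\<forall>\<delta>>0. \<exists>S\<in>\<J>. \<forall>x\<in>A. norm (S x - T x) < \<delta>"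
        using approx_span[OF JB TB appB finA] by blast
      have "\<exists>\<epsilon>>0. \<forall>p\<in>P. \<forall>S\<in>BX. norm (S (fst p) - T (fst p)) < \<epsilon> \<longrightarrow>
              cmod (snd p (T (fst p)) - snd p (S (fst p))) < e"
      proof (rule finite_eps[OF finP])
        show "\<forall>p\<in>P. \<exists>\<epsilon>>0. \<forall>S\<in>BX. norm (S (fst p) - T (fst p)) < \<epsilon> \<longrightarrow>
              cmod (snd p (T (fst p)) - snd p (S (fst p))) < e"
        proof
          fix p assume p: "p \<in> P"
          have "snd p \<in> cdual" using p Pd by auto
          hence fl: "bounded_linear (snd p)" unfolding cdual_def by blast
          obtain K where K: "K > 0" "\<forall>z. norm (snd p z) \<le> norm z * K"
            using bounded_linear.pos_bounded[OF fl] by blast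
          show "\<exists>\<epsilon>>0. \<forall>S\<in>BX. norm (S (fst p) - T (fst p)) < \<epsilon> \<longrightarrow>
              cmod (snd p (T (fst p)) - snd p (S (fst p))) < e"
          proof (intro exI[of _ "e / K"] conjI ballI impI)
            show "e / K > 0" using e K by simp
            fix S assume "S \<in> BX" and Sx: "norm (S (fst p) - T (fst p)) < e / K"
            have "snd p (T (fst p)) - snd p (S (fst p)) = snd p (T (fst p) - S (fst p))"
              by (rule linear_diff[OF bounded_linear.linear[OF fl], symmetric])
            hence "cmod (snd p (T (fst p)) - snd p (S (fst p))) \<le> norm (T (fst p) - S (fst p)) * K"
              using K(2) by simp
            also have "\<dots> = norm (S (fst p) - T (fst p)) * K" by (simp add: norm_minus_commute)
            also have "\<dots> < e / K * K" using Sx K(1) by (intro mult_strict_right_mono)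
            also have "\<dots> = e" using K(1) by simp
            finally show "cmod (snd p (T (fst p)) - snd p (S (fst p))) < e" .
          qed
        qed
      next
        fix p \<epsilon> \<epsilon>'
        assume "\<forall>S\<in>BX. norm (S (fst p) - T (fst p)) < \<epsilon> \<longrightarrow> cmod (snd p (T (fst p)) - snd p (S (fst p))) < e"
          "0 < \<epsilon>'" "\<epsilon>' \<le> \<epsilon>"
        thus "\<forall>S\<in>BX. norm (S (fst p) - T (fst p)) < \<epsilon>' \<longrightarrow> cmod (snd p (T (fst p)) - snd p (S (fst p))) < e"
          by (auto intro: less_le_trans)
      qed
      then obtain \<epsilon> where eps: "\<epsilon> > 0" "\<forall>p\<in>P. \<forall>S\<in>BX. norm (S (fst p) - T (fst p)) < \<epsilon> \<longrightarrow>
              cmod (snd p (T (fst p)) - snd p (S (fst p))) < e" by blast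
      obtain S where S: "S \<in> \<J>" "\<forall>x\<in>A. norm (S x - T x) < \<epsilon>" using appA eps(1) by blast
      have SB: "S \<in> BX" using S(1) JB by blast
      show "\<exists>S\<in>\<J>. \<forall>(x, f)\<in>P. cmod (f (T x) - f (S x)) < e"
      proof (intro bexI[OF _ S(1)] ballI)
        fix p assume p: "p \<in> P"
        have "fst p \<in> A" unfolding A_def using p by simp
        hence "norm (S (fst p) - T (fst p)) < \<epsilon>" using S(2) by blast
        hence "cmod (snd p (T (fst p)) - snd p (S (fst p))) < e" using eps(2) p SB by blast
        thus "case p of (x, f) \<Rightarrow> cmod (f (T x) - f (S x)) < e" by (cases p) simp
      qed
    qed
    thus "T \<in> \<J>" using Wc unfolding wot_closed_def by blast
  qed
  have JR: "\<J> \<subseteq> Ref \<J>"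
  proof
    fix T assume T: "T \<in> \<J>"
    have "T \<in> BX" using T JB by blast
    moreover have "T x \<in> closed_span {A x | A. A \<in> \<J>}" for x
    proof -
      have "T x \<in> {A x | A. A \<in> \<J>}" using T by blast
      hence "T x \<in> cvs.span {A x | A. A \<in> \<J>}" by (rule cvs.span_base)
      thus ?thesis unfolding closed_span_def cspan_eq by (rule closure_subset[THEN subsetD])
    qed
    ultimately show "T \<in> Ref \<J>" unfolding Ref_def by blast
  qed
  have RM: "Ref \<J> \<subseteq> Mop \<E> (Phi \<J>)"
  proof
    fix T assume T: "T \<in> Ref \<J>"
    have "T \<in> BX" using T unfolding Ref_def by blast
    moreover have "T ` E \<subseteq> Phi \<J> E" if "E \<in> \<E>" for E
    proof
      fix y assume "y \<in> T ` E"
      then obtain x where x: "x \<in> E" "y = T x" by blast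
      have "T x \<in> closed_span {A x | A. A \<in> \<J>}" using T unfolding Ref_def by blast
      moreover have "{A x | A. A \<in> \<J>} \<subseteq> gen \<J> E" unfolding gen_def using x(1) by blast
      hence "closed_span {A x | A. A \<in> \<J>} \<subseteq> Phi \<J> E"
        unfolding closed_span_def cspan_eq Phi_alt by (intro closure_mono cvs.span_mono)
      ultimately show "y \<in> Phi \<J> E" using x(2) by blast
    qed
    ultimately show "T \<in> Mop \<E> (Phi \<J>)" unfolding Mop_def by blast
  qed
  show ?thesis using JM MJ JR RM by blast
qed


end
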